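(* Let $p,\varepsilon\in(0,1)$ be real numbers and let $S$ be a set of $m$ vectors in a real vector space with $\dim\operatorname{span}(S)\le D$. Let $S_p$ be the random subset of $S$ containing each element independently with probability $p$. Then \[ \mathbb P\big(|S\cap\operatorname{span}(S_p)|<\varepsilon m\big)\le\mathbb P(X\le D), \] where $X\sim\mathrm{Bin}(m,(1-\varepsilon)p)$. *)

theory Defs
  imports "HOL-Analysis.Analysis" "HOL-Probability.Probability"
begin

definition random_subset :: "'a set \<Rightarrow> real \<Rightarrow> 'a set pmf" where
  "random_subset S p = map_pmf (\<lambda>f. {x \<in> S. f x}) (Pi_pmf S False (\<lambda>_. bernoulli_pmf p))"

end

theory Submission
  imports Defs
begin

lemma random_subset_empty: "random_subset {} p = return_pmf {}"
  by (simp add: random_subset_def)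

lemma random_subset_insert:
  assumes "finite S" "x \<notin> S"
  shows "random_subset (insert x S) p =
    bind_pmf (bernoulli_pmf p) (\<lambda>b. map_pmf (\<lambda>T. if b then insert x T else T) (random_subset S p))"
proof -
  have "random_subset (insert x S) p =
     bind_pmf (bernoulli_pmf p) (\<lambda>b. bind_pmf (Pi_pmf S False (\<lambda>_. bernoulli_pmf p))
        (\<lambda>f. return_pmf {y \<in> insert x S. (f(x:=b)) y}))"
    unfolding random_subset_def using assms
    by (simp add: Pi_pmf_insert' map_bind_pmf map_return_pmf)
  also have "\<dots> = bind_pmf (bernoulli_pmf p) (\<lambda>b. map_pmf (\<lambda>T. if b then insert x T else T) (random_subset S p))"
    unfolding random_subset_def map_pmf_def bind_assoc_pmf bind_return_pmf
    apply (intro bind_pmf_cong refl)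
    using assms(2) by auto
  finally show ?thesis .
qed

lemma prob_bind_bernoulli:
  assumes "0 \<le> p" "p \<le> 1"
  shows "measure_pmf.prob (bind_pmf (bernoulli_pmf p) N) A =
     p * measure_pmf.prob (N True) A + (1 - p) * measure_pmf.prob (N False) A"
proof -
  define a where "a = measure_pmf.prob (N True) A"
  define b where "b = measure_pmf.prob (N False) A"
  have a0: "0 \<le> a" "0 \<le> b" unfolding a_def b_def by auto
  have e: "\<And>M. emeasure (measure_pmf M) A = ennreal (measure_pmf.prob M A)"
    by (rule measure_pmf.emeasure_eq_measure)
  have "ennreal (measure_pmf.prob (bind_pmf (bernoulli_pmf p) N) A) =
     (\<integral>\<^sup>+x. emeasure (N x) A \<partial>bernoulli_pmf p)"
    unfolding e[symmetric] by (rule emeasure_bind_pmf)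
  also have "\<dots> = emeasure (N True) A * ennreal p + emeasure (N False) A * ennreal (1 - p)"
    by (rule nn_integral_bernoulli_pmf) (use assms in auto)
  also have "\<dots> = ennreal a * ennreal p + ennreal b * ennreal (1 - p)"
    unfolding e a_def b_def by (rule refl)
  also have "\<dots> = ennreal (a * p) + ennreal (b * (1 - p))"
    using a0 by (simp only: ennreal_mult')
  also have "\<dots> = ennreal (a * p + b * (1 - p))"
    using a0 assms by (intro ennreal_plus[symmetric]) auto
  finally have "measure_pmf.prob (bind_pmf (bernoulli_pmf p) N) A = a * p + b * (1 - p)"
    using a0 assms by (subst (asm) ennreal_inj) auto
  then show ?thesis unfolding a_def b_def by (simp add: mult.commute)
qed

lemma card_le_dim:
  fixes B V :: "'a::real_vector set"
  assumes "finite V" "independent B" "B \<subseteq> span V"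
  shows "card B \<le> dim V"
proof -
  obtain A where A: "A \<subseteq> V" "independent A" "V \<subseteq> span A" "card A = dim V"
    using basis_exists by blast
  have "finite A" using A(1) assms(1) finite_subset by blast
  have "span V \<subseteq> span A" using A(3) by (simp add: span_minimal)
  then have "B \<subseteq> span A" using assms(3) by blast
  then show ?thesis using independent_span_bound[OF \<open>finite A\<close> assms(2)] A(4) by auto
qed

lemma dim_mono_fin:
  fixes U V :: "'a::real_vector set"
  assumes "finite V" "U \<subseteq> span V"
  shows "dim U \<le> dim V"
proof -
  obtain B where B: "B \<subseteq> U" "independent B" "U \<subseteq> span B" "card B = dim U"
    using basis_exists by blast
  show ?thesis using card_le_dim[OF assms(1) B(2)] B(1,4) assms(2) by auto
qed

lemma dim_insert_ge:
  fixes W :: "'a::real_vector set"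
  assumes "finite W" "x \<notin> span W"
  shows "dim W + 1 \<le> dim (insert x W)"
proof -
  obtain B where B: "B \<subseteq> W" "independent B" "W \<subseteq> span B" "card B = dim W"
    using basis_exists by blast
  have fB: "finite B" using B(1) assms(1) finite_subset by blast
  have "span B \<subseteq> span W" using B(1) span_mono by blast
  then have xB: "x \<notin> span B" using assms(2) by blast
  then have xB': "x \<notin> B" using span_base by blast
  have "independent (insert x B)" using independent_insertI[OF xB B(2)] .
  moreover have "insert x B \<subseteq> span (insert x W)"
    using B(1) span_superset by blast
  ultimately have "card (insert x B) \<le> dim (insert x W)"
    using card_le_dim assms(1) by blast
  then show ?thesis using fB xB' B(4) by simp
qed


fun G :: "real \<Rightarrow> nat \<Rightarrow> nat \<Rightarrow> real" where
  "G p 0 s = 1"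
| "G p (Suc k) 0 = (1 - p) * G p k 0"
| "G p (Suc k) (Suc s) = p * G p (Suc k) s + (1 - p) * G p k (Suc s)"

definition Gm :: "real \<Rightarrow> nat \<Rightarrow> nat \<Rightarrow> real" where
  "Gm p k s = (case s of 0 \<Rightarrow> 0 | Suc s' \<Rightarrow> G p k s')"

lemma G_rec: "G p (Suc k) s = p * Gm p (Suc k) s + (1 - p) * G p k s"
  by (cases s) (auto simp: Gm_def)

lemma G_nonneg: "0 \<le> p \<Longrightarrow> p \<le> 1 \<Longrightarrow> 0 \<le> G p k s"
  by (induction p k s rule: G.induct) auto

lemma G_mono_s:
  assumes "0 \<le> p" "p \<le> 1"
  shows "G p k s \<le> G p k (Suc s)"
proof (induction k arbitrary: s)
  case 0 then show ?case by simp
next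
  case (Suc k)
  show ?case
  proof (induction s)
    case 0
    have "G p (Suc k) 0 = (1 - p) * G p k 0" by simp
    also have "\<dots> \<le> (1 - p) * G p k 1" using Suc.IH[of 0] assms by (intro mult_left_mono) auto
    also have "\<dots> \<le> p * G p (Suc k) 0 + (1 - p) * G p k 1"
      using G_nonneg[OF assms] assms by simp
    finally show ?case by simp
  next
    case (Suc s)
    have "G p (Suc k) (Suc s) = p * G p (Suc k) s + (1 - p) * G p k (Suc s)" by simp
    also have "\<dots> \<le> p * G p (Suc k) (Suc s) + (1 - p) * G p k (Suc (Suc s))"
      using Suc.IH \<open>\<And>s. G p k s \<le> G p k (Suc s)\<close>[of "Suc s"] assms
      by (intro add_mono mult_left_mono) auto
    finally show ?case by simp
  qed
qed

lemma G_mono_k: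
  assumes "0 \<le> p" "p \<le> 1"
  shows "G p (Suc k) s \<le> G p k s"
proof (induction s)
  case 0 then show ?case using G_nonneg[OF assms, of k 0] assms
    by (simp add: mult_left_le_one_le)
next
  case (Suc s)
  have "G p (Suc k) (Suc s) = p * G p (Suc k) s + (1 - p) * G p k (Suc s)" by simp
  also have "\<dots> \<le> p * G p k (Suc s) + (1 - p) * G p k (Suc s)"
    using Suc.IH G_mono_s[OF assms, of k s] assms
    by (intro add_mono mult_left_mono) auto
  finally show ?case by (simp add: algebra_simps)
qed

lemma Gm_mono_k:
  assumes "0 \<le> p" "p \<le> 1"
  shows "Gm p (Suc k) s \<le> Gm p k s"
  using G_mono_k[OF assms] by (cases s) (auto simp: Gm_def)

lemma K1:
  assumes "0 \<le> p" "p \<le> 1"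
  shows "p * (G p k s - Gm p k s) \<le> G p k s - G p (Suc k) s"
proof -
  have "G p k s - G p (Suc k) s = p * (G p k s - Gm p (Suc k) s)"
    by (simp add: G_rec algebra_simps)
  moreover have "p * (G p k s - Gm p k s) \<le> p * (G p k s - Gm p (Suc k) s)"
    using Gm_mono_k[OF assms, of k s] assms by (intro mult_left_mono) auto
  ultimately show ?thesis by simp
qed

lemma K2:
  assumes "0 \<le> p" "p \<le> 1"
  shows "p * (G p (Suc k) s - Gm p (Suc k) s) \<le> G p k s - G p (Suc k) s"
proof -
  have "G p k s - G p (Suc k) s = p * (G p k s - Gm p (Suc k) s)"
    by (simp add: G_rec algebra_simps)
  moreover have "p * (G p (Suc k) s - Gm p (Suc k) s) \<le> p * (G p k s - Gm p (Suc k) s)"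
    using G_mono_k[OF assms, of k s] assms by (intro mult_left_mono) auto
  ultimately show ?thesis by simp
qed

definition interp :: "(nat \<Rightarrow> real) \<Rightarrow> real \<Rightarrow> real" where
  "interp h x = (1 - frac x) * h (nat \<lfloor>x\<rfloor>) + frac x * h (Suc (nat \<lfloor>x\<rfloor>))"

lemma interp_eq:
  assumes "real k \<le> y" "y < real k + 1"
  shows "interp h y = (1 - (y - real k)) * h k + (y - real k) * h (Suc k)"
proof -
  have "\<lfloor>y\<rfloor> = int k" using assms by (simp add: floor_eq_iff)
  then show ?thesis unfolding interp_def frac_def by simp
qed

lemma interp_step:
  fixes f g :: "nat \<Rightarrow> real"
  assumes k1: "\<And>k. c * (f k - g k) \<le> f k - f (Suc k)"
    and k2: "\<And>k. c * (f (Suc k) - g (Suc k)) \<le> f k - f (Suc k)"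
    and z: "0 \<le> z" and d: "0 \<le> d" "d \<le> 1"
  shows "interp f (z + d) \<le> interp f z - d * c * (interp f z - interp g z)"
proof -
  define k where "k = nat \<lfloor>z\<rfloor>"
  define t where "t = z - real k"
  have kz: "real k \<le> z" "z < real k + 1" unfolding k_def using z by linarith+
  have t: "0 \<le> t" "t < 1" unfolding t_def using kz by auto
  have fz: "interp f z = (1 - t) * f k + t * f (Suc k)" and gz: "interp g z = (1 - t) * g k + t * g (Suc k)"
    using interp_eq[OF kz] unfolding t_def by auto
  define A where "A = f k - f (Suc k)"
  define B where "B = f (Suc k) - f (Suc (Suc k))"
  define P0 where "P0 = c * (f k - g k)"
  define P1 where "P1 = c * (f (Suc k) - g (Suc k))"
  have A0: "P0 \<le> A" and A1: "P1 \<le> A" and B1: "P1 \<le> B"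
    unfolding A_def B_def P0_def P1_def using k1[of k] k2[of k] k1[of "Suc k"] by auto
  have rhs: "interp f z - d * c * (interp f z - interp g z) = (1 - t) * f k + t * f (Suc k) - d * ((1 - t) * P0 + t * P1)"
    unfolding fz gz P0_def P1_def by (simp add: algebra_simps)
  show ?thesis
  proof (cases "t + d < 1")
    case True
    have "interp f (z + d) = (1 - (t + d)) * f k + (t + d) * f (Suc k)"
    proof -
      have "real k \<le> z + d" "z + d < real k + 1" using True kz t d unfolding t_def by auto
      from interp_eq[OF this, of f] show ?thesis unfolding t_def by (simp add: algebra_simps)
    qed
    moreover have "(1 - t) * P0 + t * P1 \<le> (1 - t) * A + t * A"
      using A0 A1 t by (intro add_mono mult_left_mono) auto
    then have "d * ((1 - t) * P0 + t * P1) \<le> d * A"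
      using d by (intro mult_left_mono) (auto simp: algebra_simps)
    ultimately show ?thesis unfolding rhs A_def by (simp add: algebra_simps)
  next
    case False
    have "interp f (z + d) = (1 - (t + d - 1)) * f (Suc k) + (t + d - 1) * f (Suc (Suc k))"
    proof -
      have "real (Suc k) \<le> z + d" "z + d < real (Suc k) + 1" using False kz t d unfolding t_def by auto
      from interp_eq[OF this, of f] show ?thesis unfolding t_def by (simp add: algebra_simps)
    qed
    moreover have "(1 - t) * A = d * ((1 - t) * A) + (1 - d) * ((1 - t) * A)" by (simp add: algebra_simps)
    moreover have "d * ((1 - t) * P0) \<le> d * ((1 - t) * A)"
      using A0 t d by (intro mult_left_mono) auto
    moreover have "(1 - d) * ((1 - t) * P1) \<le> (1 - d) * ((1 - t) * A)"
      using A1 t d by (intro mult_left_mono) auto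
    moreover have "(t + d - 1) * P1 \<le> (t + d - 1) * B"
      using B1 False by (intro mult_left_mono) auto
    moreover have "d * ((1 - t) * P0 + t * P1) = d * ((1 - t) * P0) + (1 - d) * ((1 - t) * P1) + (t + d - 1) * P1"
      by (simp add: algebra_simps)
    ultimately show ?thesis unfolding rhs A_def B_def by (simp add: algebra_simps)
  qed
qed


lemma binom_rec:
  assumes "0 \<le> q" "q \<le> 1"
  shows "measure_pmf.prob (binomial_pmf (Suc n) q) {..s} =
     (1 - q) * measure_pmf.prob (binomial_pmf n q) {..s} +
     q * (case s of 0 \<Rightarrow> 0 | Suc s' \<Rightarrow> measure_pmf.prob (binomial_pmf n q) {..s'})"
proof -
  have "binomial_pmf (Suc n) q = bind_pmf (bernoulli_pmf q)
      (\<lambda>b. map_pmf (\<lambda>k. (if b then 1 else 0) + k) (binomial_pmf n q))"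
    using assms by (simp add: binomial_pmf_Suc map_pmf_def)
  moreover have e1: "((+) (Suc 0) -` {..s}) = Suc -` {..s}" by auto
  moreover have e0: "((+) (0::nat)) -` {..s} = {..s}" by auto
  ultimately have "measure_pmf.prob (binomial_pmf (Suc n) q) {..s} =
     q * measure_pmf.prob (binomial_pmf n q) (Suc -` {..s}) +
     (1 - q) * measure_pmf.prob (binomial_pmf n q) {..s}"
    using assms by (simp add: prob_bind_bernoulli)
  moreover have "measure_pmf.prob (binomial_pmf n q) (Suc -` {..s}) =
      (case s of 0 \<Rightarrow> 0 | Suc s' \<Rightarrow> measure_pmf.prob (binomial_pmf n q) {..s'})"
  proof (cases s)
    case 0
    then have "(Suc -` {..s}) = {}" by auto
    then show ?thesis using 0 by simp
  next
    case (Suc s')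
    then have "(Suc -` {..s}) = {..s'}" by auto
    then show ?thesis using Suc by simp
  qed
  ultimately show ?thesis by simp
qed

lemma interp_zero: "interp h 0 = h 0"
  unfolding interp_def by simp

lemma T_bound:
  assumes p: "0 \<le> p" "p \<le> 1" and d: "0 \<le> d" "d \<le> 1"
  shows "interp (\<lambda>k. G p k s) (d * real m) \<le> measure_pmf.prob (binomial_pmf m (d * p)) {..s}"
proof (induction m arbitrary: s)
  case 0
  have "d * p \<in> {0..1}" using p d by (auto intro: mult_le_one)
  then show ?case by (simp add: interp_zero binomial_pmf_0)
next
  case (Suc m)
  define z where "z = d * real m"
  have z0: "0 \<le> z" unfolding z_def using d by simp
  have q: "0 \<le> d * p" "d * p \<le> 1" using p d by (auto intro: mult_le_one)
  have gz: "interp (\<lambda>k. Gm p k s) z = (case s of 0 \<Rightarrow> 0 | Suc s' \<Rightarrow> interp (\<lambda>k. G p k s') z)"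
    by (cases s) (auto simp: Gm_def interp_def)
  have "interp (\<lambda>k. G p k s) (d * real (Suc m)) = interp (\<lambda>k. G p k s) (z + d)"
    unfolding z_def by (simp add: algebra_simps)
  also have "\<dots> \<le> interp (\<lambda>k. G p k s) z - d * p * (interp (\<lambda>k. G p k s) z - interp (\<lambda>k. Gm p k s) z)"
    by (rule interp_step[of p "\<lambda>k. G p k s" "\<lambda>k. Gm p k s", OF K1[OF p] K2[OF p] z0 d])
  also have "\<dots> = (1 - d * p) * interp (\<lambda>k. G p k s) z + d * p * interp (\<lambda>k. Gm p k s) z"
    by (simp add: algebra_simps)
  also have "\<dots> \<le> (1 - d * p) * measure_pmf.prob (binomial_pmf m (d * p)) {..s} +
     d * p * (case s of 0 \<Rightarrow> 0 | Suc s' \<Rightarrow> measure_pmf.prob (binomial_pmf m (d * p)) {..s'})"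
  proof (intro add_mono mult_left_mono)
    show "interp (\<lambda>k. G p k s) z \<le> measure_pmf.prob (binomial_pmf m (d * p)) {..s}"
      using Suc.IH unfolding z_def .
    show "interp (\<lambda>k. Gm p k s) z \<le> (case s of 0 \<Rightarrow> 0 | Suc s' \<Rightarrow> measure_pmf.prob (binomial_pmf m (d * p)) {..s'})"
      unfolding gz using Suc.IH unfolding z_def by (cases s) auto
  qed (use q in auto)
  also have "\<dots> = measure_pmf.prob (binomial_pmf (Suc m) (d * p)) {..s}"
    using binom_rec[OF q] by simp
  finally show ?case .
qed


lemma comb:
  fixes S :: "'a::real_vector set"
  assumes "finite S" and p: "0 \<le> p" "p \<le> 1"
  shows "finite W \<Longrightarrow> dim (W \<union> S) \<le> dim W + s \<Longrightarrow>
    measure_pmf.prob (random_subset S p) {T. F \<le> card (S - span (W \<union> T))} \<le> G p F s"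
  using assms(1)
proof (induction S arbitrary: W F s rule: finite_induct)
  case empty
  then show ?case using G_nonneg[OF p] by (cases F) (auto simp: random_subset_empty)
next
  case (insert x S')
  show ?case
  proof (cases F)
    case 0
    then show ?thesis by simp
  next
    case (Suc F')
    define P1 where "P1 = measure_pmf.prob (random_subset S' p) {T. F \<le> card (insert x S' - span (W \<union> insert x T))}"
    define P2 where "P2 = measure_pmf.prob (random_subset S' p) {T. F \<le> card (insert x S' - span (W \<union> T))}"
    have dec: "measure_pmf.prob (random_subset (insert x S') p) {T. F \<le> card (insert x S' - span (W \<union> T))} = p * P1 + (1 - p) * P2"
      unfolding P1_def P2_def random_subset_insert[OF insert(1,2)] prob_bind_bernoulli[OF p]
      by (simp add: vimage_def)
    have finWS: "finite (W \<union> insert x S')" using insert.prems insert.hyps by auto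
    have dimWS': "dim (W \<union> S') \<le> dim W + s"
      using dim_mono_fin[OF finWS, of "W \<union> S'"] span_superset[of "W \<union> insert x S'"] insert.prems(2) by auto
    show ?thesis
    proof (cases "x \<in> span W")
      case True
      define E where "E = {T. F \<le> card (S' - span (W \<union> T))}"
      have "\<And>T. x \<in> span (W \<union> T)" using True span_mono[of W] by blast
      then have sp: "\<And>T. span (W \<union> insert x T) = span (W \<union> T)"
        by (metis Un_insert_right span_redundant)
      have "\<And>T. insert x S' - span (W \<union> T) = S' - span (W \<union> T)"
        using \<open>\<And>T. x \<in> span (W \<union> T)\<close> by auto
      then have "P1 = measure_pmf.prob (random_subset S' p) E" "P2 = measure_pmf.prob (random_subset S' p) E"
        unfolding P1_def P2_def E_def sp by simp_all
      moreover have "measure_pmf.prob (random_subset S' p) E \<le> G p F s"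
        unfolding E_def using insert.IH[OF insert.prems(1) dimWS'] .
      ultimately show ?thesis unfolding dec by (simp add: algebra_simps)
    next
      case False
      have "dim W + 1 \<le> dim (insert x W)" using dim_insert_ge[OF insert.prems(1) False] .
      moreover have "dim (insert x W) \<le> dim (W \<union> insert x S')"
        using dim_mono_fin[OF finWS, of "insert x W"] span_superset[of "W \<union> insert x S'"] by auto
      ultimately obtain s' where s: "s = Suc s'" using insert.prems(2) by (cases s) auto
      have eqset: "insert x W \<union> S' = W \<union> insert x S'" by auto
      have dim1: "dim (insert x W \<union> S') \<le> dim (insert x W) + s'"
        using insert.prems(2) \<open>dim W + 1 \<le> dim (insert x W)\<close> unfolding eqset s by simp
      have "\<And>T. W \<union> insert x T = insert x W \<union> T" by auto
      moreover have "\<And>T. insert x S' - span (insert x W \<union> T) = S' - span (insert x W \<union> T)"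
        using span_base[of x] by auto
      ultimately have "P1 = measure_pmf.prob (random_subset S' p) {T. F \<le> card (S' - span (insert x W \<union> T))}"
        unfolding P1_def by simp
      also have "\<dots> \<le> G p F s'"
        using insert.IH[of "insert x W" s' F] insert.prems(1) dim1 by simp
      finally have P1le: "P1 \<le> G p F s'" .
      have "{T. F \<le> card (insert x S' - span (W \<union> T))} \<subseteq> {T. F' \<le> card (S' - span (W \<union> T))}"
      proof safe
        fix T assume a: "F \<le> card (insert x S' - span (W \<union> T))"
        have "insert x S' - span (W \<union> T) \<subseteq> insert x (S' - span (W \<union> T))" by auto
        then have "card (insert x S' - span (W \<union> T)) \<le> card (insert x (S' - span (W \<union> T)))"
          using insert.hyps(1) by (intro card_mono) auto
        also have "\<dots> \<le> Suc (card (S' - span (W \<union> T)))"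
          by (simp add: card_insert_le_m1 card_insert_if insert.hyps(1))
        finally show "F' \<le> card (S' - span (W \<union> T))" using a Suc by simp
      qed
      then have "P2 \<le> measure_pmf.prob (random_subset S' p) {T. F' \<le> card (S' - span (W \<union> T))}"
        unfolding P2_def by (intro measure_pmf.finite_measure_mono) auto
      also have "\<dots> \<le> G p F' s"
        using insert.IH[OF insert.prems(1) dimWS'] .
      finally have P2le: "P2 \<le> G p F' s" .
      have "p * P1 + (1 - p) * P2 \<le> p * G p F s' + (1 - p) * G p F' s"
        using P1le P2le p by (intro add_mono mult_left_mono) auto
      also have "\<dots> = G p F s" unfolding Suc s by simp
      finally show ?thesis unfolding dec .
    qed
  qed
qed

theorem lemma3p1:
  fixes S :: "'a::real_vector set" and m D :: nat and p \<epsilon> :: real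
  assumes "0 < p" "p < 1" "0 < \<epsilon>" "\<epsilon> < 1"
    and "finite S" "card S = m"
    and "dim (span S) \<le> D"
  shows "measure_pmf.prob (random_subset S p) {T. real (card (S \<inter> span T)) < \<epsilon> * real m}
           \<le> measure_pmf.prob (binomial_pmf m ((1 - \<epsilon>) * p)) {..D}"
proof -
  have p: "0 \<le> p" "p \<le> 1" using assms by auto
  define d where "d = 1 - \<epsilon>"
  have d: "0 \<le> d" "d \<le> 1" unfolding d_def using assms by auto
  define k where "k = nat \<lfloor>d * real m\<rfloor>"
  have k: "real k \<le> d * real m" "d * real m < real k + 1"
  proof -
    have "0 \<le> d * real m" using d by simp
    then show "real k \<le> d * real m" "d * real m < real k + 1" unfolding k_def by linarith+
  qed
  have sub: "{T. real (card (S \<inter> span T)) < \<epsilon> * real m} \<subseteq> {T. Suc k \<le> card (S - span ({} \<union> T))}"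
  proof safe
    fix T assume a: "real (card (S \<inter> span T)) < \<epsilon> * real m"
    have "card (S - (S \<inter> span T)) = card S - card (S \<inter> span T)"
      using assms(5) by (intro card_Diff_subset) auto
    moreover have "card (S \<inter> span T) \<le> card S" using assms(5) by (intro card_mono) auto
    moreover have "S - (S \<inter> span T) = S - span T" by auto
    ultimately have "real (card (S - span T)) = real m - real (card (S \<inter> span T))"
      using assms(6) by simp
    then have "d * real m < real (card (S - span T))" using a unfolding d_def by (simp add: algebra_simps)
    then have "real k < real (card (S - span T))" using k by linarith
    then show "Suc k \<le> card (S - span ({} \<union> T))" by simp
  qed
  have "measure_pmf.prob (random_subset S p) {T. real (card (S \<inter> span T)) < \<epsilon> * real m}
      \<le> measure_pmf.prob (random_subset S p) {T. Suc k \<le> card (S - span ({} \<union> T))}"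
    using sub by (intro measure_pmf.finite_measure_mono) auto
  also have "\<dots> \<le> G p (Suc k) D"
    using comb[OF assms(5) p, of "{}" D "Suc k"] assms(7) by simp
  also have "\<dots> \<le> interp (\<lambda>k. G p k D) (d * real m)"
  proof -
    have fl: "nat \<lfloor>d * real m\<rfloor> = k" unfolding k_def ..
    have t: "0 \<le> frac (d * real m)" "frac (d * real m) < 1" by (auto simp: frac_lt_1)
    have "G p (Suc k) D \<le> G p k D" by (rule G_mono_k[OF p])
    then have "0 \<le> (1 - frac (d * real m)) * (G p k D - G p (Suc k) D)"
      using t by (intro mult_nonneg_nonneg) auto
    then have "G p (Suc k) D \<le> (1 - frac (d * real m)) * G p k D + frac (d * real m) * G p (Suc k) D"
      by (simp add: algebra_simps)
    then show ?thesis unfolding interp_def fl .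
  qed
  also have "\<dots> \<le> measure_pmf.prob (binomial_pmf m (d * p)) {..D}"
    by (rule T_bound[OF p d])
  finally show ?thesis unfolding d_def .
qed

end
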